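(* In the transactional panorama model described in the context, for any view graph, any (sequence of) write transactions in any state of computation, and any sequence of read transactions, it is always possible to answer the read transactions so that any chosen two of the three properties monotonicity, visibility, and consistency-minimal hold.
   Context: A view graph is a directed acyclic graph on a fixed set $N$ of nodes (source data and views); there is an edge $n_j \to n_i$ if view $n_i$ takes $n_j$ as input, and the dependents of a node are the nodes reachable from it. The view graph is multi-versioned. Write transactions $w^{t_1},\dots,w^{t_n}$ (timestamps $t_1<\dots<t_n$, starting from an initial version $G^{t_0}$) each modify some source nodes and must recompute their dependents; they are processed one at a time in timestamp order. Write transaction $w^{t_i}$ creates version $G^{t_i}=(E,N,V^{t_i})$, where for each node $n_k$ the set $V^{t_i}$ contains: the result $v_k^{t_i}$ if $w^{t_i}$ updates $n_k$ and has already computed it; a placeholder $UC_k^{t_i}$ ("under computation") if $w^{t_i}$ updates $n_k$ but has not yet computed it; or the result of $n_k$ from the previous version if $w^{t_i}$ does not update $n_k$. A committed version contains no UCs. The timestamp of a returned state is the timestamp of the version it belongs to. Read transactions $r^{s_1},\dots,r^{s_m}$ ($s_1<\dots<s_m$) each read the set of views in the user's current viewport (a subset of $N$, which may change between reads) and return immediately, without waiting, a set $H^{s_i}$ containing one state (a view result or a UC) per view read. Monotonicity: for any view $n_k$ read by two transactions $r^{s_i}, r^{s_j}$ with $s_i<s_j$, returning states with timestamps $t_p$ and $t_q$, we have $t_p \le t_q$. Visibility: no $H^{s_i}$ contains a UC. Consistency: for each $r^{s_i}$ there is a version $G^{t_j}=(E,N,V^{t_j})$ with $t_j\le s_i$ and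 $H^{s_i}\subseteq V^{t_j}$. Consistency-minimal: consistency holds and each read transaction returns the states (restricted to its views) of the most recent version of the view graph among those that minimize the number of UCs returned for that transaction (the minimization being over the versions permitted by the other properties that are required). *)

theory Defs
  imports Complex_Main
begin

text \<open>States of a node in a version: the result v_k^{t_j} of node k computed by
  write transaction j (j = 0 is the initial version), or the placeholder UC_k^{t_j}.\<close>
datatype 'n vstate = Res 'n nat | UC 'n nat

fun is_UC :: "'n vstate \<Rightarrow> bool" where
  "is_UC (Res k j) = False"
| "is_UC (UC k j) = True"

fun ts :: "(nat \<Rightarrow> real) \<Rightarrow> 'n vstate \<Rightarrow> real" where
  "ts t (Res k j) = t j"
| "ts t (UC k j) = t j"

definition source_nodes :: "'n set \<Rightarrow> ('n \<times> 'n) set \<Rightarrow> 'n set" where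
  "source_nodes N E = {x \<in> N. \<forall>y. (y, x) \<notin> E}"

text \<open>Nodes updated by a write modifying the source set S: S together with its
  dependents (nodes reachable from S).\<close>
definition updated :: "('n \<times> 'n) set \<Rightarrow> 'n set \<Rightarrow> 'n set" where
  "updated E S = E\<^sup>* `` S"

text \<open>State of node k in version G^{t_j}, given which nodes of write j are already
  computed (c j) and which nodes write j updates (upd j).\<close>
primrec vst :: "(nat \<Rightarrow> 'n set) \<Rightarrow> (nat \<Rightarrow> 'n set) \<Rightarrow> nat \<Rightarrow> 'n \<Rightarrow> 'n vstate" where
  "vst upd c 0 k = Res k 0"
| "vst upd c (Suc j) k =
     (if k \<in> upd (Suc j) then (if k \<in> c (Suc j) then Res k (Suc j) else UC k (Suc j))
      else vst upd c j k)"

definition Vset :: "'n set \<Rightarrow> (nat \<Rightarrow> 'n set) \<Rightarrow> (nat \<Rightarrow> 'n set) \<Rightarrow> nat \<Rightarrow> 'n vstate set" where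
  "Vset N upd c j = (\<lambda>k. vst upd c j k) ` N"

text \<open>Answers: H i k is the state returned for view k by read i (for k in the viewport R i).
  cmp i j is the set of nodes of write j already computed at the time of read i.\<close>
definition wf_answer where
  "wf_answer n t m s R upd cmp (H :: nat \<Rightarrow> 'n \<Rightarrow> 'n vstate) \<longleftrightarrow>
     (\<forall>i\<in>{1..m}. \<forall>k\<in>R i. \<exists>j\<le>n. t j \<le> s i \<and> H i k = vst upd (cmp i) j k)"

definition monotonic where
  "monotonic t m s R (H :: nat \<Rightarrow> 'n \<Rightarrow> 'n vstate) \<longleftrightarrow>
     (\<forall>i\<in>{1..m}. \<forall>i'\<in>{1..m}. \<forall>k. (s i :: real) < s i' \<longrightarrow> k \<in> R i \<longrightarrow> k \<in> R i' \<longrightarrow>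
        ts t (H i k) \<le> ts t (H i' k))"

definition visible where
  "visible m R (H :: nat \<Rightarrow> 'n \<Rightarrow> 'n vstate) \<longleftrightarrow>
     (\<forall>i\<in>{1..m}. \<forall>k\<in>R i. \<not> is_UC (H i k))"

definition consistent where
  "consistent N n t m s R upd cmp (H :: nat \<Rightarrow> 'n \<Rightarrow> 'n vstate) \<longleftrightarrow>
     (\<forall>i\<in>{1..m}. \<exists>j\<le>n. t j \<le> s i \<and> (\<lambda>k. H i k) ` R i \<subseteq> Vset N upd (cmp i) j)"

text \<open>Version j is permitted for read i by consistency and by those of the other
  properties that are required (monotonicity w.r.t. the earlier reads; visibility).\<close>
definition permitted where
  "permitted reqM reqV n t m s R upd cmp (H :: nat \<Rightarrow> 'n \<Rightarrow> 'n vstate) i j \<longleftrightarrow>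
     j \<le> n \<and> t j \<le> s i \<and>
     (reqV \<longrightarrow> (\<forall>k\<in>R i. \<not> is_UC (vst upd (cmp i) j k))) \<and>
     (reqM \<longrightarrow> (\<forall>i'\<in>{1..m}. \<forall>k. (s i' :: real) < s i \<longrightarrow> k \<in> R i' \<longrightarrow> k \<in> R i \<longrightarrow>
                   ts t (H i' k) \<le> ts t (vst upd (cmp i) j k)))"

definition num_UC where
  "num_UC R upd cmp i j = card {k \<in> R i. is_UC (vst upd (cmp i) j k)}"

definition consistency_minimal where
  "consistency_minimal reqM reqV N n t m s R upd cmp (H :: nat \<Rightarrow> 'n \<Rightarrow> 'n vstate) \<longleftrightarrow>
     consistent N n t m s R upd cmp H \<and>
     (\<forall>i\<in>{1..m}. \<exists>j. permitted reqM reqV n t m s R upd cmp H i j \<and>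
        (\<forall>j'. permitted reqM reqV n t m s R upd cmp H i j' \<longrightarrow>
              num_UC R upd cmp i j \<le> num_UC R upd cmp i j') \<and>
        (\<forall>j'. permitted reqM reqV n t m s R upd cmp H i j' \<longrightarrow>
              num_UC R upd cmp i j' = num_UC R upd cmp i j \<longrightarrow> t j' \<le> t j) \<and>
        (\<forall>k\<in>R i. H i k = vst upd (cmp i) j k))"

text \<open>Admissible state of computation of the writes at read times: writes are processed
  one at a time in timestamp order (at each read, writes before some index c are
  committed, writes after c have computed nothing), only updated nodes are computed,
  and computation never regresses between reads.\<close>
definition comp_state where
  "comp_state n m upd (cmp :: nat \<Rightarrow> nat \<Rightarrow> 'n set) \<longleftrightarrow>
     (\<forall>i\<in>{1..m}. \<forall>j. cmp i j \<subseteq> upd j) \<and>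
     (\<forall>i\<in>{1..m}. \<exists>c\<le>n. (\<forall>j. 1 \<le> j \<longrightarrow> j < c \<longrightarrow> cmp i j = upd j) \<and>
                        (\<forall>j. c < j \<longrightarrow> cmp i j = {})) \<and>
     (\<forall>i\<in>{1..m}. \<forall>i'\<in>{1..m}. \<forall>j. i \<le> i' \<longrightarrow> cmp i j \<subseteq> cmp i' j)"

end

theory Submission
  imports Defs
begin

lemma ts_indep: "ts t (vst U c j k) = ts t (vst U c' j k)"
  by (induction j) auto

lemma ts_le:
  assumes "strict_mono_on {0..n} t"
  shows "j \<le> n \<Longrightarrow> ts t (vst U c j k) \<le> t j"
proof (induction j)
  case 0 then show ?case by simp
next
  case (Suc j)
  have "t j \<le> t (Suc j)" using strict_mono_on_leD[OF assms, of j "Suc j"] Suc.prems by auto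
  then show ?case using Suc by auto
qed

lemma ts_mono:
  assumes "strict_mono_on {0..n} t"
  shows "j' \<le> n \<Longrightarrow> j \<le> j' \<Longrightarrow> ts t (vst U c j k) \<le> ts t (vst U c j' k)"
proof (induction j')
  case 0 then show ?case by simp
next
  case (Suc j')
  show ?case
  proof (cases "j = Suc j'")
    case True then show ?thesis by simp
  next
    case False
    then have jj: "j \<le> j'" using Suc.prems by simp
    have ih: "ts t (vst U c j k) \<le> ts t (vst U c j' k)" using Suc jj by simp
    have "ts t (vst U c j' k) \<le> t j'" using ts_le[OF assms, of j' U c k] Suc.prems by simp
    moreover have "t j' \<le> t (Suc j')" using strict_mono_on_leD[OF assms, of j' "Suc j'"] Suc.prems by auto
    ultimately show ?thesis using ih by auto
  qed
qed

lemma opt_exists: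
  fixes P :: "nat set" and f :: "nat \<Rightarrow> nat" and t :: "nat \<Rightarrow> real"
  assumes "strict_mono_on {0..n} t" and "P \<subseteq> {0..n}" and "j0 \<in> P"
  shows "\<exists>j\<in>P. (\<forall>j'\<in>P. f j \<le> f j') \<and> (\<forall>j'\<in>P. f j' = f j \<longrightarrow> t j' \<le> t j)"
proof -
  have fin: "finite P" using assms(2) finite_subset by blast
  define u where "u = Min (f ` P)"
  have uin: "u \<in> f ` P" unfolding u_def using fin assms(3) by (intro Min_in) auto
  have ule: "\<And>j'. j' \<in> P \<Longrightarrow> u \<le> f j'" unfolding u_def using fin by auto
  define Q where "Q = {j \<in> P. f j = u}"
  have finQ: "finite Q" using fin unfolding Q_def by auto
  have neQ: "Q \<noteq> {}" using uin unfolding Q_def by auto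
  define j where "j = Max Q"
  have jQ: "j \<in> Q" unfolding j_def using finQ neQ by (rule Max_in)
  have jmax: "\<And>j'. j' \<in> Q \<Longrightarrow> j' \<le> j" unfolding j_def using finQ by auto
  show ?thesis
  proof (intro bexI conjI ballI impI)
    show "j \<in> P" using jQ unfolding Q_def by auto
    fix j' assume "j' \<in> P"
    then show "f j \<le> f j'" using ule jQ unfolding Q_def by auto
  next
    fix j' assume a: "j' \<in> P" "f j' = f j"
    then have "j' \<in> Q" using jQ unfolding Q_def by auto
    then have "j' \<le> j" by (rule jmax)
    moreover have "j' \<in> {0..n}" "j \<in> {0..n}" using a jQ assms(2) unfolding Q_def by auto
    ultimately show "t j' \<le> t j" using strict_mono_on_leD[OF assms(1)] by blast
  qed
qed

lemma permitted_cong: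
  assumes "\<forall>i'\<in>{1..m}. s i' < s i \<longrightarrow> H i' = H' i'"
  shows "permitted reqM reqV n t m s R U cmp H i j = permitted reqM reqV n t m s R U cmp H' i j"
  using assms unfolding permitted_def by auto

theorem theorem2p7:
  fixes N :: "'n set" and E :: "('n \<times> 'n) set"
    and n :: nat and t :: "nat \<Rightarrow> real" and Src :: "nat \<Rightarrow> 'n set"
    and m :: nat and s :: "nat \<Rightarrow> real" and R :: "nat \<Rightarrow> 'n set"
    and cmp :: "nat \<Rightarrow> nat \<Rightarrow> 'n set"
  assumes "finite N" and "E \<subseteq> N \<times> N" and "acyclic E"
    and "strict_mono_on {0..n} t"
    and "\<forall>j\<in>{1..n}. Src j \<subseteq> source_nodes N E"
    and "strict_mono_on {1..m} s"
    and "\<forall>i\<in>{1..m}. R i \<subseteq> N"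
    and "\<forall>i\<in>{1..m}. t 0 \<le> s i"
    and "comp_state n m (\<lambda>j. updated E (Src j)) cmp"
  shows
    "(\<exists>H. wf_answer n t m s R (\<lambda>j. updated E (Src j)) cmp H \<and>
          monotonic t m s R H \<and> visible m R H) \<and>
     (\<exists>H. wf_answer n t m s R (\<lambda>j. updated E (Src j)) cmp H \<and>
          visible m R H \<and>
          consistency_minimal False True N n t m s R (\<lambda>j. updated E (Src j)) cmp H) \<and>
     (\<exists>H. wf_answer n t m s R (\<lambda>j. updated E (Src j)) cmp H \<and>
          monotonic t m s R H \<and>
          consistency_minimal True False N n t m s R (\<lambda>j. updated E (Src j)) cmp H)"
proof -
  let ?U = "\<lambda>j. updated E (Src j)"
  note tm = assms(4)
  have slt: "\<And>i i'. i \<in> {1..m} \<Longrightarrow> i' \<in> {1..m} \<Longrightarrow> s i' < s i \<Longrightarrow> i' < i"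
  proof (rule ccontr)
    fix i i' assume a: "i \<in> {1..m}" "i' \<in> {1..m}" "s i' < s i" "\<not> i' < i"
    then have "s i \<le> s i'" using strict_mono_on_leD[OF assms(6), of i i'] by auto
    then show False using a by auto
  qed
  have vst0: "\<And>c k. vst ?U c 0 k = Res k 0" by simp
  have P1: "\<exists>H. wf_answer n t m s R ?U cmp H \<and> monotonic t m s R H \<and> visible m R H"
  proof (intro exI conjI)
    show "wf_answer n t m s R ?U cmp (\<lambda>i k. Res k 0)"
      unfolding wf_answer_def using assms(8) by (metis vst0 zero_le)
    show "monotonic t m s R (\<lambda>i k. Res k 0)" unfolding monotonic_def by simp
    show "visible m R (\<lambda>i k. Res k 0)" unfolding visible_def by simp
  qed
  have P2: "\<exists>H. wf_answer n t m s R ?U cmp H \<and> visible m R H \<and>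
          consistency_minimal False True N n t m s R ?U cmp H"
  proof -
    have "\<forall>i\<in>{1..m}. \<exists>j\<in>{j. permitted False True n t m s R ?U cmp undefined i j}.
       (\<forall>j'\<in>{j. permitted False True n t m s R ?U cmp undefined i j}. num_UC R ?U cmp i j \<le> num_UC R ?U cmp i j') \<and>
       (\<forall>j'\<in>{j. permitted False True n t m s R ?U cmp undefined i j}. num_UC R ?U cmp i j' = num_UC R ?U cmp i j \<longrightarrow> t j' \<le> t j)"
    proof
      fix i assume i: "i \<in> {1..m}"
      show "\<exists>j\<in>{j. permitted False True n t m s R ?U cmp undefined i j}.
       (\<forall>j'\<in>{j. permitted False True n t m s R ?U cmp undefined i j}. num_UC R ?U cmp i j \<le> num_UC R ?U cmp i j') \<and>
       (\<forall>j'\<in>{j. permitted False True n t m s R ?U cmp undefined i j}. num_UC R ?U cmp i j' = num_UC R ?U cmp i j \<longrightarrow> t j' \<le> t j)"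
      proof (rule opt_exists[OF tm])
        show "{j. permitted False True n t m s R ?U cmp undefined i j} \<subseteq> {0..n}"
          unfolding permitted_def by auto
        show "0 \<in> {j. permitted False True n t m s R ?U cmp undefined i j}"
          unfolding permitted_def using assms(8) i by simp
      qed
    qed
    then obtain J where J: "\<forall>i\<in>{1..m}. J i \<in> {j. permitted False True n t m s R ?U cmp undefined i j} \<and>
       (\<forall>j'\<in>{j. permitted False True n t m s R ?U cmp undefined i j}. num_UC R ?U cmp i (J i) \<le> num_UC R ?U cmp i j') \<and>
       (\<forall>j'\<in>{j. permitted False True n t m s R ?U cmp undefined i j}. num_UC R ?U cmp i j' = num_UC R ?U cmp i (J i) \<longrightarrow> t j' \<le> t (J i))"
      by metis
    define H where "H = (\<lambda>i k. vst ?U (cmp i) (J i) k)"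
    have pc: "\<And>i j. permitted False True n t m s R ?U cmp H i j = permitted False True n t m s R ?U cmp undefined i j"
      unfolding permitted_def by simp
    show ?thesis
    proof (intro exI conjI)
      show "wf_answer n t m s R ?U cmp H" unfolding wf_answer_def H_def using J
        unfolding permitted_def by blast
      show "visible m R H" unfolding visible_def H_def using J unfolding permitted_def by blast
      show "consistency_minimal False True N n t m s R ?U cmp H"
        unfolding consistency_minimal_def
      proof (intro conjI ballI)
        show "consistent N n t m s R ?U cmp H" unfolding consistent_def
        proof
          fix i assume i: "i \<in> {1..m}"
          have "J i \<le> n \<and> t (J i) \<le> s i" using J i unfolding permitted_def by auto
          moreover have "(\<lambda>k. H i k) ` R i \<subseteq> Vset N ?U (cmp i) (J i)"
            using bspec[OF assms(7) i] unfolding H_def Vset_def by auto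
          ultimately show "\<exists>j\<le>n. t j \<le> s i \<and> (\<lambda>k. H i k) ` R i \<subseteq> Vset N ?U (cmp i) j"
            by blast
        qed
        fix i assume i: "i \<in> {1..m}"
        show "\<exists>j. permitted False True n t m s R ?U cmp H i j \<and>
        (\<forall>j'. permitted False True n t m s R ?U cmp H i j' \<longrightarrow> num_UC R ?U cmp i j \<le> num_UC R ?U cmp i j') \<and>
        (\<forall>j'. permitted False True n t m s R ?U cmp H i j' \<longrightarrow>
              num_UC R ?U cmp i j' = num_UC R ?U cmp i j \<longrightarrow> t j' \<le> t j) \<and>
        (\<forall>k\<in>R i. H i k = vst ?U (cmp i) j k)"
        proof (rule exI[of _ "J i"])
          have Ji: "J i \<in> {j. permitted False True n t m s R ?U cmp undefined i j} \<and>
       (\<forall>j'\<in>{j. permitted False True n t m s R ?U cmp undefined i j}. num_UC R ?U cmp i (J i) \<le> num_UC R ?U cmp i j') \<and>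
       (\<forall>j'\<in>{j. permitted False True n t m s R ?U cmp undefined i j}. num_UC R ?U cmp i j' = num_UC R ?U cmp i (J i) \<longrightarrow> t j' \<le> t (J i))"
            using J i by blast
          have Hi: "\<forall>k\<in>R i. H i k = vst ?U (cmp i) (J i) k" unfolding H_def by simp
          show "permitted False True n t m s R ?U cmp H i (J i) \<and>
        (\<forall>j'. permitted False True n t m s R ?U cmp H i j' \<longrightarrow> num_UC R ?U cmp i (J i) \<le> num_UC R ?U cmp i j') \<and>
        (\<forall>j'. permitted False True n t m s R ?U cmp H i j' \<longrightarrow>
              num_UC R ?U cmp i j' = num_UC R ?U cmp i (J i) \<longrightarrow> t j' \<le> t (J i)) \<and>
        (\<forall>k\<in>R i. H i k = vst ?U (cmp i) (J i) k)"
            unfolding pc using Ji Hi by auto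
        qed
      qed
    qed
  qed
  define HJ where "HJ = (\<lambda>(J::nat \<Rightarrow> nat) i k. vst ?U (cmp i) (J i) k)"
  define opt where "opt = (\<lambda>H i j. permitted True False n t m s R ?U cmp H i j \<and>
        (\<forall>j'. permitted True False n t m s R ?U cmp H i j' \<longrightarrow> num_UC R ?U cmp i j \<le> num_UC R ?U cmp i j') \<and>
        (\<forall>j'. permitted True False n t m s R ?U cmp H i j' \<longrightarrow>
              num_UC R ?U cmp i j' = num_UC R ?U cmp i j \<longrightarrow> t j' \<le> t j))"
  have ind: "p \<le> m \<Longrightarrow> \<exists>J. \<forall>i\<in>{1..p}. opt (HJ J) i (J i)" for p
  proof (induction p)
    case 0 then show ?case by simp
  next
    case (Suc p)
    then obtain J where J: "\<forall>i\<in>{1..p}. opt (HJ J) i (J i)" by auto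
    define i where "i = Suc p"
    have im: "i \<in> {1..m}" using Suc.prems i_def by auto
    define S where "S = J ` {i' \<in> {1..m}. s i' < s i}"
    have Sp: "\<And>i'. i' \<in> {1..m} \<Longrightarrow> s i' < s i \<Longrightarrow> i' \<in> {1..p}"
      using slt[OF im] i_def by fastforce
    have finS: "finite (insert 0 S)" unfolding S_def by auto
    define js where "js = Max (insert 0 S)"
    have jsin: "js \<in> insert 0 S" unfolding js_def using finS by (intro Max_in) auto
    have jsge: "\<And>x. x \<in> S \<Longrightarrow> x \<le> js" unfolding js_def using finS by auto
    have Sprop: "\<And>x. x \<in> S \<Longrightarrow> x \<le> n \<and> t x < s i"
    proof -
      fix x assume "x \<in> S"
      then obtain i' where i': "i' \<in> {1..m}" "s i' < s i" "x = J i'" unfolding S_def by auto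
      then have "opt (HJ J) i' (J i')" using J Sp by blast
      then show "x \<le> n \<and> t x < s i" using i' unfolding opt_def permitted_def by auto
    qed
    have perm_js: "permitted True False n t m s R ?U cmp (HJ J) i js"
      unfolding permitted_def
    proof (intro conjI impI allI ballI)
      show "js \<le> n" using jsin Sprop by auto
      show "t js \<le> s i" using jsin Sprop assms(8) im by fastforce
      fix i' k assume a: "i' \<in> {1..m}" "s i' < s i" "k \<in> R i'" "k \<in> R i"
      have "J i' \<in> S" unfolding S_def using a by auto
      then have "J i' \<le> js" "js \<le> n" using jsge jsin Sprop by auto
      then have "ts t (vst ?U (cmp i) (J i') k) \<le> ts t (vst ?U (cmp i) js k)"
        using ts_mono[OF tm, of js "J i'" ?U "cmp i" k] by simp
      moreover have "ts t (HJ J i' k) = ts t (vst ?U (cmp i) (J i') k)"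
        unfolding HJ_def by (simp add: ts_indep[of t ?U "cmp i'" "J i'" k "cmp i"])
      ultimately show "ts t (HJ J i' k) \<le> ts t (vst ?U (cmp i) js k)" by simp
    qed simp
    have Psub: "{j. permitted True False n t m s R ?U cmp (HJ J) i j} \<subseteq> {0..n}"
      unfolding permitted_def by auto
    have jsmem: "js \<in> {j. permitted True False n t m s R ?U cmp (HJ J) i j}" using perm_js by simp
    obtain j0 where j0: "j0 \<in> {j. permitted True False n t m s R ?U cmp (HJ J) i j}"
      "\<forall>j'\<in>{j. permitted True False n t m s R ?U cmp (HJ J) i j}. num_UC R ?U cmp i j0 \<le> num_UC R ?U cmp i j'"
      "\<forall>j'\<in>{j. permitted True False n t m s R ?U cmp (HJ J) i j}. num_UC R ?U cmp i j' = num_UC R ?U cmp i j0 \<longrightarrow> t j' \<le> t j0"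
      using opt_exists[OF tm Psub jsmem, of "num_UC R ?U cmp i"] by blast
    define J' where "J' = J(i := j0)"
    have HJeq: "\<And>i'. i' \<noteq> i \<Longrightarrow> HJ J' i' = HJ J i'" unfolding HJ_def J'_def by auto
    have pceq: "\<And>i2 j. i2 \<in> {1..Suc p} \<Longrightarrow>
       permitted True False n t m s R ?U cmp (HJ J') i2 j = permitted True False n t m s R ?U cmp (HJ J) i2 j"
    proof -
      fix i2 j assume i2: "i2 \<in> {1..Suc p}"
      then have i2m: "i2 \<in> {1..m}" using Suc.prems by auto
      show "permitted True False n t m s R ?U cmp (HJ J') i2 j = permitted True False n t m s R ?U cmp (HJ J) i2 j"
        apply (rule permitted_cong)
        using slt[OF i2m] HJeq i2 i_def by fastforce
    qed
    show ?case
    proof (intro exI ballI)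
      fix i2 assume i2: "i2 \<in> {1..Suc p}"
      show "opt (HJ J') i2 (J' i2)"
      proof (cases "i2 = i")
        case True
        then show ?thesis unfolding opt_def pceq[OF i2] using j0 True by (simp add: J'_def)
      next
        case False
        then have "i2 \<in> {1..p}" using i2 i_def by auto
        then show ?thesis unfolding opt_def pceq[OF i2] using J False by (simp add: J'_def opt_def)
      qed
    qed
  qed
  obtain J where J: "\<forall>i\<in>{1..m}. opt (HJ J) i (J i)" using ind[of m] by auto
  have P3: "\<exists>H. wf_answer n t m s R ?U cmp H \<and> monotonic t m s R H \<and>
          consistency_minimal True False N n t m s R ?U cmp H"
  proof (intro exI conjI)
    show "wf_answer n t m s R ?U cmp (HJ J)" unfolding wf_answer_def HJ_def
      using J unfolding opt_def permitted_def by auto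
    show "monotonic t m s R (HJ J)" unfolding monotonic_def
    proof (intro ballI allI impI)
      fix i i' k assume a: "i \<in> {1..m}" "i' \<in> {1..m}" "s i < s i'" "k \<in> R i" "k \<in> R i'"
      have "permitted True False n t m s R ?U cmp (HJ J) i' (J i')" using J a unfolding opt_def by auto
      then have "ts t (HJ J i k) \<le> ts t (vst ?U (cmp i') (J i') k)"
        unfolding permitted_def using a by blast
      then show "ts t (HJ J i k) \<le> ts t (HJ J i' k)" unfolding HJ_def by simp
    qed
    show "consistency_minimal True False N n t m s R ?U cmp (HJ J)"
      unfolding consistency_minimal_def
    proof (intro conjI ballI)
      show "consistent N n t m s R ?U cmp (HJ J)" unfolding consistent_def
      proof
        fix i assume i: "i \<in> {1..m}"
        have "J i \<le> n \<and> t (J i) \<le> s i" using J i unfolding opt_def permitted_def by auto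
        moreover have "(\<lambda>k. HJ J i k) ` R i \<subseteq> Vset N ?U (cmp i) (J i)"
          using bspec[OF assms(7) i] unfolding HJ_def Vset_def by auto
        ultimately show "\<exists>j\<le>n. t j \<le> s i \<and> (\<lambda>k. HJ J i k) ` R i \<subseteq> Vset N ?U (cmp i) j"
          by blast
      qed
      fix i assume i: "i \<in> {1..m}"
      show "\<exists>j. permitted True False n t m s R ?U cmp (HJ J) i j \<and>
        (\<forall>j'. permitted True False n t m s R ?U cmp (HJ J) i j' \<longrightarrow> num_UC R ?U cmp i j \<le> num_UC R ?U cmp i j') \<and>
        (\<forall>j'. permitted True False n t m s R ?U cmp (HJ J) i j' \<longrightarrow>
              num_UC R ?U cmp i j' = num_UC R ?U cmp i j \<longrightarrow> t j' \<le> t j) \<and>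
        (\<forall>k\<in>R i. HJ J i k = vst ?U (cmp i) j k)"
        apply (rule exI[of _ "J i"])
        using J i unfolding opt_def HJ_def by auto
    qed
  qed
  show ?thesis using P1 P2 P3 by blast
qed

end
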